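(* For $1\le j\le m$ and $a,b\in(\mathbb{Z}_n)^m$, put $\Gamma^j_{\chi_a}:=\chi_a\cdot\Gamma^j$. Then in $M_q(\mathfrak{g})$: - $\Delta(\Gamma^j_{\chi_a})=\chi_{a+\epsilon_j}\otimes\Gamma^j_{\chi_a}+\Gamma^j_{\chi_a}\otimes\chi_a$; - $\chi_a\cdot\Gamma^j_{\chi_b}=\prod_{i=1}^m\mathfrak{q}^{-c_{ij}a_i\lfloor\frac{b_j+1}{n}\rfloor}\Gamma^j_{\chi_{a+b}}$; - $\Gamma^j_{\chi_b}\cdot\chi_a=\prod_{i=1}^mq^{c_{ji}a_i}\Gamma^j_{\chi_{a+b}}$. Here $a+b$ is taken in $(\mathbb{Z}_n)^m$.
   Context: Notation and setting. $\mathbb{k}$ is an algebraically closed field of characteristic $0$. $(a_{ij})$ is an $m\times m$ Cartan matrix of finite type, and $d_i\in\{1,2,3\}$ are such that $c_{ij}=d_ia_{ij}$ is symmetric. $n\ge2$, $q$ is a primitive $n^2$-th root of unity in $\mathbb{k}$, $\mathfrak{q}=q^n$, and $l_i=\mathrm{ord}(q^{c_{ii}})$. $\lfloor\cdot\rfloor$ is the floor function, and elements of $(\mathbb{Z}_n)^m$ have entries in $\{0,\dots,n-1\}$; $\epsilon_j$ is the $j$-th standard vector. $A_q(\mathfrak{g})$ is the half small quasi-quantum group: the subalgebra generated by $h_i=g_i^n$ and $e_i$ of the Hopf algebra $H$ generated by commuting grouplikes $g_i$ ($g_i^{n^2}=1$) and $e_i$ with $g_ie_jg_i^{-1}=q^{\delta_{ij}}e_j$,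 $e_i^{l_i}=0$, the quantum Serre relations, and $\Delta(e_i)=e_i\otimes\prod_jg_j^{c_{ij}}+1\otimes e_i$, with quasi-Hopf structure inherited from a twist of $H$. Let $1_a$ be the idempotents of $\mathbb{k}\langle h_i\rangle$ with $1_ah_i=\mathfrak{q}^{a_i}1_a$, $1^i_k=\frac1n\sum_j\mathfrak{q}^{-kj}h_i^j$, $b_i=\sum_a\prod_jq^{-c_{ij}a_j}1_a$, and $H_i=\prod_jh_j^{c_{ij}}$. Its structure is: - $\Delta(h_i)=h_i\otimes h_i$; - $\Delta(e_i)=e_i\otimes b_i^{-1}+1\otimes\sum_{j=1}^{n-1}1^i_je_i+H_i^{-1}\otimes1^i_0e_i$; - $\phi=\sum_{a,b,c}\prod_{i,j}\mathfrak{q}^{-c_{ij}a_i\lfloor\frac{b_j+c_j}{n}\rfloor}1_a\otimes1_b\otimes1_c$. $M_q(\mathfrak{g})=A_q(\mathfrak{g})^*$ is the dual Majid algebra: - its coproduct is dual to the product of $A_q(\mathfrak{g})$; - its product is $(f\cdot g)(x)=\sum f(x_{(1)})g(x_{(2)})$; - its reassociator is $\Phi=\phi$ viewed as a functional, so $\Phi(\chi_a,\chi_b,\chi_c)=\prod_{s,t}\mathfrak{q}^{-c_{st}a_s\lfloor\frac{b_t+c_t}{n}\rfloor}$. $\chi_a$ ($a\in(\mathbb{Z}_n)^m$) is the algebra character of $A_q(\mathfrak{g})$ with $\chi_a(h_j)=\mathfrak{q}^{a_j}$ and $\chi_a(e_j)=0$; these are the grouplikes of $M_q(\mathfrak{g})$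 and $\chi_a\chi_b=\chi_{a+b}$; set $\chi_i=\chi_{\epsilon_i}$. Fix a homogeneous basis of $A_q(\mathfrak{g})$ ($\deg h_i=0$, $\deg e_i=1$) containing all $1_a$ and $1_ae_i$, and let $\Gamma^i=(1_{\epsilon_i}e_i)^*$ be the corresponding dual basis element. *)

theory Defs
  imports Main "HOL-Computational_Algebra.Polynomial"
begin

text \<open>Indices are 0-based: i ranges over {..<m}. A Cartan matrix is cA :: nat => nat => int,
  the symmetrizer is d :: nat => nat, and c_ij = d_i a_ij.\<close>

definition cartan_finite_type :: "nat \<Rightarrow> (nat \<Rightarrow> nat \<Rightarrow> int) \<Rightarrow> (nat \<Rightarrow> nat) \<Rightarrow> bool" where
  "cartan_finite_type m cA d \<longleftrightarrow>
     (\<forall>i<m. cA i i = 2) \<and>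
     (\<forall>i<m. \<forall>j<m. i \<noteq> j \<longrightarrow> cA i j \<le> 0) \<and>
     (\<forall>i<m. \<forall>j<m. cA i j = 0 \<longleftrightarrow> cA j i = 0) \<and>
     (\<forall>i<m. d i \<in> {1,2,3}) \<and>
     (\<forall>i<m. \<forall>j<m. int (d i) * cA i j = int (d j) * cA j i) \<and>
     (\<forall>x :: nat \<Rightarrow> real. (\<exists>i<m. x i \<noteq> 0) \<longrightarrow>
        0 < (\<Sum>i<m. \<Sum>j<m. x i * real_of_int (int (d i) * cA i j) * x j))"

definition cc :: "(nat \<Rightarrow> nat \<Rightarrow> int) \<Rightarrow> (nat \<Rightarrow> nat) \<Rightarrow> nat \<Rightarrow> nat \<Rightarrow> int" where
  "cc cA d i j = int (d i) * cA i j"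

definition primitive_root :: "'k::field \<Rightarrow> nat \<Rightarrow> bool" where
  "primitive_root q N \<longleftrightarrow> q ^ N = 1 \<and> (\<forall>k. 0 < k \<and> k < N \<longrightarrow> q ^ k \<noteq> 1)"

text \<open>(Z_n)^m: vectors with entries in {0..n-1} (and 0 outside the index range).\<close>
definition Zn :: "nat \<Rightarrow> nat \<Rightarrow> (nat \<Rightarrow> nat) set" where
  "Zn m n = {a. (\<forall>i<m. a i < n) \<and> (\<forall>i. m \<le> i \<longrightarrow> a i = 0)}"

definition vadd :: "nat \<Rightarrow> nat \<Rightarrow> (nat \<Rightarrow> nat) \<Rightarrow> (nat \<Rightarrow> nat) \<Rightarrow> (nat \<Rightarrow> nat)" where
  "vadd m n a b = (\<lambda>i. if i < m then (a i + b i) mod n else 0)"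

definition eps :: "nat \<Rightarrow> nat \<Rightarrow> nat" where
  "eps j = (\<lambda>i. if i = j then 1 else 0)"

text \<open>A is represented through a homogeneous basis indexed by a finite type 'b.
  Vectors of A (and functionals on A, i.e. elements of M = A^* ) are functions 'b => 'k;
  elements of A \<otimes> A (and of M \<otimes> M) are functions 'b \<times> 'b => 'k.
  mu x y z = coefficient of basis element z in the product x*y;
  dc x y z = coefficient of y \<otimes> z in Delta(x).\<close>

definition vec_of :: "'b \<Rightarrow> 'b \<Rightarrow> 'k::field" where
  "vec_of x = (\<lambda>y. if y = x then 1 else 0)"

definition mulv :: "('b::finite \<Rightarrow> 'b \<Rightarrow> 'b \<Rightarrow> 'k::field) \<Rightarrow> ('b \<Rightarrow> 'k) \<Rightarrow> ('b \<Rightarrow> 'k) \<Rightarrow> 'b \<Rightarrow> 'k" where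
  "mulv mu v w = (\<lambda>z. \<Sum>x\<in>UNIV. \<Sum>y\<in>UNIV. v x * w y * mu x y z)"

definition smulv :: "'k::field \<Rightarrow> ('b \<Rightarrow> 'k) \<Rightarrow> 'b \<Rightarrow> 'k" where
  "smulv c v = (\<lambda>x. c * v x)"

definition powv :: "('b::finite \<Rightarrow> 'b \<Rightarrow> 'b \<Rightarrow> 'k::field) \<Rightarrow> ('b \<Rightarrow> 'k) \<Rightarrow> ('b \<Rightarrow> 'k) \<Rightarrow> nat \<Rightarrow> 'b \<Rightarrow> 'k" where
  "powv mu one v k = ((mulv mu v) ^^ k) one"

definition tens :: "('b \<Rightarrow> 'k::field) \<Rightarrow> ('b \<Rightarrow> 'k) \<Rightarrow> 'b \<times> 'b \<Rightarrow> 'k" where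
  "tens v w = (\<lambda>(y, z). v y * w z)"

definition tmul :: "('b::finite \<Rightarrow> 'b \<Rightarrow> 'b \<Rightarrow> 'k::field) \<Rightarrow> ('b \<times> 'b \<Rightarrow> 'k) \<Rightarrow> ('b \<times> 'b \<Rightarrow> 'k) \<Rightarrow> 'b \<times> 'b \<Rightarrow> 'k" where
  "tmul mu T S = (\<lambda>(z, w). \<Sum>x\<in>UNIV. \<Sum>y\<in>UNIV. \<Sum>x'\<in>UNIV. \<Sum>y'\<in>UNIV.
      T (x, y) * S (x', y') * mu x x' z * mu y y' w)"

definition Dlv :: "('b::finite \<Rightarrow> 'b \<Rightarrow> 'b \<Rightarrow> 'k::field) \<Rightarrow> ('b \<Rightarrow> 'k) \<Rightarrow> 'b \<times> 'b \<Rightarrow> 'k" where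
  "Dlv dc v = (\<lambda>(y, z). \<Sum>x\<in>UNIV. v x * dc x y z)"

definition onev :: "nat \<Rightarrow> nat \<Rightarrow> ((nat \<Rightarrow> nat) \<Rightarrow> 'b) \<Rightarrow> 'b \<Rightarrow> 'k::field" where
  "onev m n I = (\<lambda>z. \<Sum>a\<in>Zn m n. vec_of (I a) z)"

definition idem1 :: "('b::finite \<Rightarrow> 'b \<Rightarrow> 'b \<Rightarrow> 'k::field) \<Rightarrow> nat \<Rightarrow> nat \<Rightarrow> ((nat \<Rightarrow> nat) \<Rightarrow> 'b)
     \<Rightarrow> 'k \<Rightarrow> (nat \<Rightarrow> 'b \<Rightarrow> 'k) \<Rightarrow> nat \<Rightarrow> nat \<Rightarrow> 'b \<Rightarrow> 'k" where
  "idem1 mu m n I q hv i k = (\<lambda>x. (1 / of_nat n) *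
      (\<Sum>j<n. (q ^ n) powi (- (int k * int j)) * powv mu (onev m n I) (hv i) j x))"

text \<open>b_i^{-1} = sum_a prod_j q^(c_ij a_j) 1_a  (the inverse of b_i = sum_a prod_j q^(-c_ij a_j) 1_a).\<close>
definition binv :: "nat \<Rightarrow> nat \<Rightarrow> (nat \<Rightarrow> nat \<Rightarrow> int) \<Rightarrow> (nat \<Rightarrow> nat) \<Rightarrow> 'k::field
     \<Rightarrow> ((nat \<Rightarrow> nat) \<Rightarrow> 'b) \<Rightarrow> nat \<Rightarrow> 'b \<Rightarrow> 'k" where
  "binv m n cA d q I i = (\<lambda>x. \<Sum>a\<in>Zn m n. (\<Prod>j<m. q powi (cc cA d i j * int (a j))) * vec_of (I a) x)"

text \<open>H_i^{-1} = prod_j h_j^(-c_ij); since h_j^n = 1 the exponent is taken mod n.\<close>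
definition Hinv :: "('b::finite \<Rightarrow> 'b \<Rightarrow> 'b \<Rightarrow> 'k::field) \<Rightarrow> nat \<Rightarrow> nat \<Rightarrow> (nat \<Rightarrow> nat \<Rightarrow> int) \<Rightarrow> (nat \<Rightarrow> nat)
     \<Rightarrow> ((nat \<Rightarrow> nat) \<Rightarrow> 'b) \<Rightarrow> (nat \<Rightarrow> 'b \<Rightarrow> 'k) \<Rightarrow> nat \<Rightarrow> 'b \<Rightarrow> 'k" where
  "Hinv mu m n cA d I hv i =
     foldr (mulv mu) (map (\<lambda>j. powv mu (onev m n I) (hv j) (nat ((- cc cA d i j) mod int n))) [0..<m])
       (onev m n I)"

text \<open>The structure of A_q(g) used in the paper, expressed in the chosen homogeneous basis:
  deg = degree of basis elements (deg h_i = 0, deg e_i = 1); I a = 1_a; E a i = 1_a e_i;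
  hv i = h_i; ev i = e_i.\<close>
definition Aq_model ::
  "nat \<Rightarrow> nat \<Rightarrow> (nat \<Rightarrow> nat \<Rightarrow> int) \<Rightarrow> (nat \<Rightarrow> nat) \<Rightarrow> 'k::field \<Rightarrow>
   ('b::finite \<Rightarrow> nat) \<Rightarrow> ('b \<Rightarrow> 'b \<Rightarrow> 'b \<Rightarrow> 'k) \<Rightarrow> ('b \<Rightarrow> 'b \<Rightarrow> 'b \<Rightarrow> 'k) \<Rightarrow>
   ((nat \<Rightarrow> nat) \<Rightarrow> 'b) \<Rightarrow> ((nat \<Rightarrow> nat) \<Rightarrow> nat \<Rightarrow> 'b) \<Rightarrow>
   (nat \<Rightarrow> 'b \<Rightarrow> 'k) \<Rightarrow> (nat \<Rightarrow> 'b \<Rightarrow> 'k) \<Rightarrow> bool" where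
  "Aq_model m n cA d q deg mu dc I E hv ev \<longleftrightarrow>
    (let Z = Zn m n; one = onev m n I; mul = mulv mu; qq = q ^ n in
     \<comment> \<open>the basis contains all 1_a and 1_a e_i, pairwise distinct\<close>
     inj_on I Z \<and> inj_on (\<lambda>(a, i). E a i) (Z \<times> {..<m}) \<and>
     (\<forall>a\<in>Z. \<forall>b\<in>Z. \<forall>i<m. I a \<noteq> E b i) \<and>
     \<comment> \<open>homogeneity: degree-0 part spanned by the 1_a, degree-1 part by the 1_a e_i\<close>
     {x. deg x = 0} = I ` Z \<and>
     {x. deg x = 1} = (\<lambda>(a, i). E a i) ` (Z \<times> {..<m}) \<and>
     \<comment> \<open>A is an associative unital graded algebra\<close>
     (\<forall>u v w. mul (mul u v) w = mul u (mul v w)) \<and>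
     (\<forall>v. mul one v = v \<and> mul v one = v) \<and>
     (\<forall>x y z. mu x y z \<noteq> 0 \<longrightarrow> deg z = deg x + deg y) \<and>
     \<comment> \<open>the 1_a are orthogonal idempotents of k<h_i> with 1_a h_i = qq^(a_i) 1_a\<close>
     (\<forall>a\<in>Z. \<forall>b\<in>Z. mul (vec_of (I a)) (vec_of (I b)) = (if a = b then vec_of (I a) else (\<lambda>_. 0))) \<and>
     (\<forall>a\<in>Z. \<forall>i<m. mul (vec_of (I a)) (hv i) = smulv (qq ^ a i) (vec_of (I a))) \<and>
     \<comment> \<open>the basis elements 1_a e_i\<close>
     (\<forall>a\<in>Z. \<forall>i<m. vec_of (E a i) = mul (vec_of (I a)) (ev i)) \<and>
     \<comment> \<open>h_i e_j h_i^{-1} = qq^(delta_ij) e_j  (from g_i e_j g_i^{-1} = q^(delta_ij) e_j)\<close>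
     (\<forall>i<m. \<forall>j<m. mul (hv i) (ev j) = smulv (qq ^ (if i = j then 1 else 0)) (mul (ev j) (hv i))) \<and>
     \<comment> \<open>the coproduct: graded unital algebra map with the given values on generators\<close>
     (\<forall>x y z. dc x y z \<noteq> 0 \<longrightarrow> deg y + deg z = deg x) \<and>
     (\<forall>v w. Dlv dc (mul v w) = tmul mu (Dlv dc v) (Dlv dc w)) \<and>
     Dlv dc one = tens one one \<and>
     (\<forall>i<m. Dlv dc (hv i) = tens (hv i) (hv i)) \<and>
     (\<forall>i<m. Dlv dc (ev i) =
        (\<lambda>p. tens (ev i) (binv m n cA d q I i) p
           + tens one (\<lambda>x. \<Sum>k\<in>{1..<n}. mul (idem1 mu m n I q hv i k) (ev i) x) p
           + tens (Hinv mu m n cA d I hv i) (mul (idem1 mu m n I q hv i 0) (ev i)) p)))"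

definition Mprod :: "('b::finite \<Rightarrow> 'b \<Rightarrow> 'b \<Rightarrow> 'k::field) \<Rightarrow> ('b \<Rightarrow> 'k) \<Rightarrow> ('b \<Rightarrow> 'k) \<Rightarrow> 'b \<Rightarrow> 'k" where
  "Mprod dc f g = (\<lambda>x. \<Sum>y\<in>UNIV. \<Sum>z\<in>UNIV. dc x y z * f y * g z)"

definition MDelta :: "('b::finite \<Rightarrow> 'b \<Rightarrow> 'b \<Rightarrow> 'k::field) \<Rightarrow> ('b \<Rightarrow> 'k) \<Rightarrow> 'b \<times> 'b \<Rightarrow> 'k" where
  "MDelta mu f = (\<lambda>(y, z). \<Sum>x\<in>UNIV. mu y z x * f x)"

text \<open>chi_a: the algebra character with chi_a(h_j) = qq^(a_j), chi_a(e_j) = 0. In the basis it is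
  the dual basis element 1_a^* (it is 1 on 1_a, 0 on 1_b for b \<noteq> a, and vanishes on the
  positive-degree part, which is the ideal generated by the e_j).\<close>
definition chi :: "((nat \<Rightarrow> nat) \<Rightarrow> 'b) \<Rightarrow> (nat \<Rightarrow> nat) \<Rightarrow> 'b \<Rightarrow> 'k::field" where
  "chi I a = vec_of (I a)"

definition Gam :: "((nat \<Rightarrow> nat) \<Rightarrow> nat \<Rightarrow> 'b) \<Rightarrow> nat \<Rightarrow> 'b \<Rightarrow> 'k::field" where
  "Gam E j = vec_of (E (eps j) j)"

definition GamChi :: "('b::finite \<Rightarrow> 'b \<Rightarrow> 'b \<Rightarrow> 'k::field) \<Rightarrow> ((nat \<Rightarrow> nat) \<Rightarrow> 'b)
    \<Rightarrow> ((nat \<Rightarrow> nat) \<Rightarrow> nat \<Rightarrow> 'b) \<Rightarrow> (nat \<Rightarrow> nat) \<Rightarrow> nat \<Rightarrow> 'b \<Rightarrow> 'k" where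
  "GamChi dc I E a j = Mprod dc (chi I a) (Gam E j)"

end

theory Submission
  imports Defs
begin

lemma vec_of_mult_left: "vec_of x y * c = (if y = x then c else 0)"
  by (simp add: vec_of_def)

lemma if01_mult: "(if P then (1::'k::field) else 0) * c = (if P then c else 0)"
  by simp

lemma mult_if01: "(a::'k::field) * (if P then 1 else 0) = (if P then a else 0)"
  by simp

lemma if0_mult: "(if P then a else 0) * (b::'k::field) = (if P then a*b else 0)"
  by simp

lemma mulv_basis_left: "mulv mu (vec_of x) v z = (\<Sum>y\<in>UNIV. v y * mu x y z)"
  unfolding mulv_def by (simp only: mult.assoc sum_distrib_left[symmetric]) (simp add: vec_of_mult_left)

lemma mulv_basis_right: "mulv mu u (vec_of y) z = (\<Sum>x\<in>UNIV. u x * mu x y z)"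
  unfolding mulv_def
  by (simp add: vec_of_def if0_mult mult_if01)

lemma mulv_basis: "mulv mu (vec_of x) (vec_of y) = mu x y"
  apply (rule ext) apply (simp only: mulv_basis_left) by (simp add: vec_of_def if0_mult mult_if01)

lemma mulv_sum_left:
  "finite S \<Longrightarrow> mulv mu (\<lambda>x. \<Sum>s\<in>S. f s x) v = (\<lambda>z. \<Sum>s\<in>S. mulv mu (f s) v z)"
  unfolding mulv_def
  by (rule ext) (simp add: sum_distrib_right sum.swap[of _ S])

lemma mulv_sum_right:
  "finite S \<Longrightarrow> mulv mu u (\<lambda>x. \<Sum>s\<in>S. f s x) = (\<lambda>z. \<Sum>s\<in>S. mulv mu u (f s) z)"
  unfolding mulv_def
  apply (rule ext) apply (simp add: sum_distrib_left sum_distrib_right)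
  apply (subst sum.swap[of _ _ S]) apply (rule sum.cong, simp)
  apply (subst sum.swap[of _ _ S]) by (simp add: mult_ac)

lemma mulv_smul_left: "mulv mu (smulv c u) v = smulv c (mulv mu u v)"
  unfolding mulv_def smulv_def by (rule ext) (simp add: sum_distrib_left mult_ac)

lemma mulv_smul_right: "mulv mu u (smulv c v) = smulv c (mulv mu u v)"
  unfolding mulv_def smulv_def by (rule ext) (simp add: sum_distrib_left mult_ac)

lemma mulv_zero_left: "mulv mu (\<lambda>_. 0) v = (\<lambda>_. 0)"
  unfolding mulv_def by simp

lemma mulv_zero_right: "mulv mu u (\<lambda>_. 0) = (\<lambda>_. 0)"
  unfolding mulv_def by simp

lemma Dlv_sum: "finite S \<Longrightarrow> Dlv dc (\<lambda>x. \<Sum>s\<in>S. f s x) = (\<lambda>p. \<Sum>s\<in>S. Dlv dc (f s) p)"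
  unfolding Dlv_def by (rule ext) (auto simp add: sum_distrib_right intro: sum.swap)

lemma Dlv_smul: "Dlv dc (smulv c v) = (\<lambda>p. c * Dlv dc v p)"
  unfolding Dlv_def smulv_def by (rule ext) (auto simp add: sum_distrib_left mult_ac)

lemma Dlv_basis: "Dlv dc (vec_of x) = (\<lambda>(y,z). dc x y z)"
  unfolding Dlv_def vec_of_def by (rule ext) (auto simp: if01_mult)

lemma tmul_tens_sum:
  assumes "finite S"
  shows "tmul mu (\<lambda>(x,y). \<Sum>s\<in>S. f s x * g s y) (tens u v)
     = (\<lambda>(z,w). \<Sum>s\<in>S. mulv mu (f s) u z * mulv mu (g s) v w)"
proof (rule ext, clarify)
  fix z w
  show "tmul mu (\<lambda>(x,y). \<Sum>s\<in>S. f s x * g s y) (tens u v) (z,w)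
     = (\<Sum>s\<in>S. mulv mu (f s) u z * mulv mu (g s) v w)"
    unfolding tmul_def tens_def mulv_def
    apply (simp add: sum_product sum_distrib_left sum_distrib_right sum.swap[where B=S] mult_ac)
    apply (rule sum.cong[OF refl])
    apply (rule trans[OF sum.swap])
    apply (rule sum.cong[OF refl])
    apply (rule sum.cong[OF refl])
    apply (rule trans[OF sum.swap])
    by (simp add: mult_ac)
qed

lemma tmul_add3:
  "tmul mu T (\<lambda>p. S1 p + S2 p + S3 p) = (\<lambda>p. tmul mu T S1 p + tmul mu T S2 p + tmul mu T S3 p)"
  unfolding tmul_def by (rule ext) (auto simp: distrib_left distrib_right sum.distrib)

locale LM =
  fixes m n :: nat and cA :: "nat \<Rightarrow> nat \<Rightarrow> int" and d :: "nat \<Rightarrow> nat"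
    and q :: "'k::field_char_0" and deg :: "'b::finite \<Rightarrow> nat"
    and mu dc :: "'b \<Rightarrow> 'b \<Rightarrow> 'b \<Rightarrow> 'k"
    and I :: "(nat \<Rightarrow> nat) \<Rightarrow> 'b" and E :: "(nat \<Rightarrow> nat) \<Rightarrow> nat \<Rightarrow> 'b"
    and hv ev :: "nat \<Rightarrow> 'b \<Rightarrow> 'k"
  assumes n2: "2 \<le> n"
    and prim: "primitive_root q (n ^ 2)"
    and csym: "\<forall>i<m. \<forall>j<m. cc cA d i j = cc cA d j i"
    and injI: "inj_on I (Zn m n)"
    and injE: "inj_on (\<lambda>(a, i). E a i) (Zn m n \<times> {..<m})"
    and disj: "\<forall>a\<in>Zn m n. \<forall>b\<in>Zn m n. \<forall>i<m. I a \<noteq> E b i"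
    and deg0: "{x. deg x = 0} = I ` Zn m n"
    and deg1: "{x. deg x = 1} = (\<lambda>(a, i). E a i) ` (Zn m n \<times> {..<m})"
    and assoc: "\<forall>u v w. mulv mu (mulv mu u v) w = mulv mu u (mulv mu v w)"
    and unit: "\<forall>v. mulv mu (onev m n I) v = v \<and> mulv mu v (onev m n I) = v"
    and mudeg: "\<forall>x y z. mu x y z \<noteq> 0 \<longrightarrow> deg z = deg x + deg y"
    and orth: "\<forall>a\<in>Zn m n. \<forall>b\<in>Zn m n. mulv mu (vec_of (I a)) (vec_of (I b)) = (if a = b then vec_of (I a) else (\<lambda>_. 0))"
    and Ih: "\<forall>a\<in>Zn m n. \<forall>i<m. mulv mu (vec_of (I a)) (hv i) = smulv ((q^n) ^ a i) (vec_of (I a))"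
    and Edef: "\<forall>a\<in>Zn m n. \<forall>i<m. vec_of (E a i) = mulv mu (vec_of (I a)) (ev i)"
    and comm: "\<forall>i<m. \<forall>j<m. mulv mu (hv i) (ev j) = smulv ((q^n) ^ (if i = j then 1 else 0)) (mulv mu (ev j) (hv i))"
    and dcdeg: "\<forall>x y z. dc x y z \<noteq> 0 \<longrightarrow> deg y + deg z = deg x"
    and Dmul: "\<forall>v w. Dlv dc (mulv mu v w) = tmul mu (Dlv dc v) (Dlv dc w)"
    and Done: "Dlv dc (onev m n I) = tens (onev m n I) (onev m n I)"
    and Dh: "\<forall>i<m. Dlv dc (hv i) = tens (hv i) (hv i)"
    and De: "\<forall>i<m. Dlv dc (ev i) =
        (\<lambda>p. tens (ev i) (binv m n cA d q I i) p
           + tens (onev m n I) (\<lambda>x. \<Sum>k\<in>{1..<n}. mulv mu (idem1 mu m n I q hv i k) (ev i) x) p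
           + tens (Hinv mu m n cA d I hv i) (mulv mu (idem1 mu m n I q hv i 0) (ev i)) p)"
begin

abbreviation "Z \<equiv> Zn m n"
abbreviation "qq \<equiv> q ^ n"
abbreviation "mul \<equiv> mulv mu"
abbreviation "one \<equiv> onev m n I"

lemma npos: "0 < n" using n2 by simp

lemma finZ: "finite Z"
  using injI by (rule finite_imageD[rotated]) simp

lemma q_pow_N: "q ^ (n^2) = 1" using prim by (simp add: primitive_root_def)

lemma q_nz: "q \<noteq> 0"
proof
  assume "q = 0"
  then have "q ^ (n^2) = 0" using npos by simp
  then show False using q_pow_N by simp
qed

lemma q_pow_mod: "q ^ k = q ^ (k mod (n^2))"
proof -
  have "q ^ k = q ^ (n^2 * (k div n^2) + k mod n^2)" by simp
  also have "\<dots> = (q ^ (n^2)) ^ (k div n^2) * q ^ (k mod n^2)" by (simp only: power_add power_mult)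
  finally show ?thesis using q_pow_N by simp
qed

lemma q_pow_eq: "q ^ k = q ^ l \<longleftrightarrow> k mod (n^2) = l mod (n^2)"
proof
  assume "k mod (n^2) = l mod (n^2)" then show "q ^ k = q ^ l" using q_pow_mod by metis
next
  assume h: "q ^ k = q ^ l"
  define a b where "a = k mod n^2" and "b = l mod n^2"
  have ab: "a < n^2" "b < n^2" using npos by (auto simp: a_def b_def)
  have e: "q ^ a = q ^ b" using h q_pow_mod a_def b_def by metis
  have gen: "x = y" if "q ^ x = q ^ y" "y \<le> x" "x < n^2" for x y
  proof (rule ccontr)
    assume "x \<noteq> y"
    then have "0 < x - y" "x - y < n^2" using that by auto
    then have "q ^ (x - y) \<noteq> 1" using prim by (simp add: primitive_root_def)
    moreover have "q ^ x = q ^ y * q ^ (x - y)" using that(2) by (metis le_add_diff_inverse power_add)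
    ultimately show False using that(1) q_nz by auto
  qed
  have "a = b"
    using gen[of a b] gen[of b a] e ab by (cases "b \<le> a") auto
  then show "k mod (n^2) = l mod (n^2)" by (simp add: a_def b_def)
qed

lemma qq_pow_eq: "qq ^ s = qq ^ t \<longleftrightarrow> s mod n = t mod n"
proof -
  have "qq ^ s = qq ^ t \<longleftrightarrow> (n*s) mod (n*n) = (n*t) mod (n*n)"
    using q_pow_eq[of "n*s" "n*t"] by (simp add: power_mult power2_eq_square)
  also have "\<dots> \<longleftrightarrow> n * (s mod n) = n * (t mod n)" by (simp add: mod_mult_mult1)
  also have "\<dots> \<longleftrightarrow> s mod n = t mod n" using npos by simp
  finally show ?thesis .
qed

lemma qq_n: "qq ^ n = 1"
  using q_pow_N by (simp add: power_mult[symmetric] power2_eq_square)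

lemma qq_nz: "qq \<noteq> 0" using q_nz by simp

lemma qq_powi_mod: "qq powi t = qq powi (t mod int n)"
proof -
  have "qq powi t = qq powi (t mod int n + int n * (t div int n))" by simp
  also have "\<dots> = qq powi (t mod int n) * qq powi (int n * (t div int n))"
    using qq_nz by (rule power_int_add[OF disjI1])
  also have "qq powi (int n * (t div int n)) = (qq powi (int n)) powi (t div int n)"
    by (rule power_int_mult)
  finally show ?thesis using qq_n by simp
qed

lemma vec_of_I_eq: "a \<in> Z \<Longrightarrow> b \<in> Z \<Longrightarrow> vec_of (I a) (I b) = (if a = b then 1 else 0)"
  using injI by (auto simp: vec_of_def inj_on_def)

lemma vec_of_E_eq: "a \<in> Z \<Longrightarrow> b \<in> Z \<Longrightarrow> i < m \<Longrightarrow> k < m \<Longrightarrow>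
   vec_of (E a i) (E b k) = (if a = b \<and> i = k then 1 else 0)"
  using injE by (auto simp: vec_of_def inj_on_def)

lemma vec_of_IE: "a \<in> Z \<Longrightarrow> b \<in> Z \<Longrightarrow> i < m \<Longrightarrow> vec_of (I a) (E b i) = 0 \<and> vec_of (E b i) (I a) = 0"
  using disj by (force simp: vec_of_def)

lemma one_I: "a \<in> Z \<Longrightarrow> one (I a) = 1"
proof -
  assume a: "a \<in> Z"
  have "one (I a) = (\<Sum>b\<in>Z. if b = a then 1 else 0)"
    unfolding onev_def by (rule sum.cong) (auto simp: vec_of_I_eq a)
  then show ?thesis using a finZ by simp
qed

lemma mul_one_left: "mul one v = v" using unit by simp
lemma mul_one_right: "mul v one = v" using unit by simp
lemma mul_assoc: "mul (mul u v) w = mul u (mul v w)" using assoc by simp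

lemma smulv_smulv: "smulv a (smulv b v) = smulv (a*b) v" by (simp add: smulv_def fun_eq_iff)

lemma hv_expand: "k < m \<Longrightarrow> hv k = (\<lambda>z. \<Sum>a\<in>Z. smulv (qq ^ a k) (vec_of (I a)) z)"
proof -
  assume k: "k < m"
  have "hv k = mul one (hv k)" by (simp add: mul_one_left)
  also have "\<dots> = (\<lambda>z. \<Sum>a\<in>Z. mul (vec_of (I a)) (hv k) z)"
    unfolding onev_def by (rule mulv_sum_left[OF finZ])
  also have "\<dots> = (\<lambda>z. \<Sum>a\<in>Z. smulv (qq ^ a k) (vec_of (I a)) z)"
    using Ih k by simp
  finally show ?thesis .
qed

lemma h_I: "k < m \<Longrightarrow> b \<in> Z \<Longrightarrow> mul (hv k) (vec_of (I b)) = smulv (qq ^ b k) (vec_of (I b))"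
proof -
  assume k: "k < m" and b: "b \<in> Z"
  have "mul (hv k) (vec_of (I b)) = (\<lambda>z. \<Sum>a\<in>Z. mul (smulv (qq ^ a k) (vec_of (I a))) (vec_of (I b)) z)"
    by (subst hv_expand[OF k]) (rule mulv_sum_left[OF finZ])
  also have "\<dots> = (\<lambda>z. \<Sum>a\<in>Z. if a = b then smulv (qq ^ b k) (vec_of (I b)) z else 0)"
    apply (rule ext, rule sum.cong[OF refl])
    using orth b by (auto simp: mulv_smul_left) (simp_all add: smulv_def)
  also have "\<dots> = smulv (qq ^ b k) (vec_of (I b))" using b finZ by simp
  finally show ?thesis .
qed

lemma I_h: "k < m \<Longrightarrow> b \<in> Z \<Longrightarrow> mul (vec_of (I b)) (hv k) = smulv (qq ^ b k) (vec_of (I b))"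
  using Ih by simp

lemma I_pow: "k < m \<Longrightarrow> a \<in> Z \<Longrightarrow> mul (vec_of (I a)) (powv mu one (hv k) j) = smulv (qq ^ (a k * j)) (vec_of (I a))"
proof (induction j)
  case 0
  then show ?case by (simp add: powv_def mul_one_right smulv_def)
next
  case (Suc j)
  have "powv mu one (hv k) (Suc j) = mul (hv k) (powv mu one (hv k) j)" by (simp add: powv_def)
  then have "mul (vec_of (I a)) (powv mu one (hv k) (Suc j))
      = mul (mul (vec_of (I a)) (hv k)) (powv mu one (hv k) j)" by (simp add: mul_assoc)
  also have "\<dots> = smulv (qq ^ a k) (smulv (qq ^ (a k * j)) (vec_of (I a)))"
    using Suc by (simp add: I_h mulv_smul_left)
  finally show ?case by (simp add: smulv_smulv power_add[symmetric] mult_Suc_right add.commute)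
qed

end

context LM begin

lemma geo_sum:
  assumes ai: "ai < n" and k: "k < n"
  shows "(1 / of_nat n) * (\<Sum>j<n. qq powi (- (int k * int j)) * qq ^ (ai * j)) = (if ai = k then 1 else (0::'k))"
proof -
  define w where "w = qq ^ ai * inverse (qq ^ k)"
  have t: "qq powi (- (int k * int j)) * qq ^ (ai * j) = w ^ j" for j
  proof -
    have 1: "qq powi (- (int k * int j)) = inverse (qq ^ (k * j))"
      by (simp add: power_int_minus flip: of_nat_mult)
    have 2: "w ^ j = qq ^ (ai * j) * inverse (qq ^ (k * j))"
      by (simp add: w_def power_mult_distrib power_inverse power_mult)
    show ?thesis unfolding 1 2 by (simp add: mult.commute)
  qed
  have wn: "w ^ n = 1"
  proof -
    have "w ^ n = (qq^ai)^n * inverse ((qq^k)^n)" by (simp add: w_def power_mult_distrib power_inverse)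
    also have "(qq^ai)^n = (qq^n)^ai" by (metis power_mult mult.commute)
    also have "(qq^k)^n = (qq^n)^k" by (metis power_mult mult.commute)
    finally show ?thesis using qq_n by simp
  qed
  have S: "(\<Sum>j<n. qq powi (- (int k * int j)) * qq ^ (ai * j)) = (\<Sum>j<n. w ^ j)"
    by (simp only: t)
  show ?thesis
  proof (cases "ai = k")
    case True
    then have "w = 1" using qq_nz by (simp add: w_def)
    then show ?thesis unfolding S using True npos by simp
  next
    case False
    have "qq ^ ai \<noteq> qq ^ k" using qq_pow_eq[of ai k] False ai k by simp
    then have "w \<noteq> 1" using qq_nz by (simp add: w_def field_simps)
    then have "(\<Sum>j<n. w ^ j) = 0" using wn by (simp add: geometric_sum)
    then show ?thesis unfolding S using False by simp
  qed
qed

lemma I_idem: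
  assumes a: "a \<in> Z" and i: "i < m" and k: "k < n"
  shows "mul (vec_of (I a)) (idem1 mu m n I q hv i k) = (if a i = k then vec_of (I a) else (\<lambda>_. 0))"
proof -
  have idem: "idem1 mu m n I q hv i k = smulv (1 / of_nat n)
      (\<lambda>x. \<Sum>j<n. smulv (qq powi (- (int k * int j))) (powv mu one (hv i) j) x)"
    by (simp add: idem1_def smulv_def fun_eq_iff)
  have "mul (vec_of (I a)) (idem1 mu m n I q hv i k) = smulv (1 / of_nat n)
      (\<lambda>z. \<Sum>j<n. mul (vec_of (I a)) (smulv (qq powi (- (int k * int j))) (powv mu one (hv i) j)) z)"
    unfolding idem by (simp add: mulv_smul_right mulv_sum_right)
  also have "\<dots> = smulv ((1 / of_nat n) * (\<Sum>j<n. qq powi (- (int k * int j)) * qq ^ (a i * j))) (vec_of (I a))"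
    apply (simp only: mulv_smul_right I_pow[OF i a])
    by (simp add: smulv_def fun_eq_iff sum_distrib_left sum_distrib_right mult_ac)
  also have "\<dots> = (if a i = k then vec_of (I a) else (\<lambda>_. 0))"
  proof -
    have ai: "a i < n" using a i by (simp add: Zn_def)
    show ?thesis by (simp only: geo_sum[OF ai k]) (auto simp: smulv_def)
  qed
  finally show ?thesis .
qed

lemma I_foldr:
  assumes a: "a \<in> Z" and h: "\<And>k. k \<in> set ks \<Longrightarrow> mul (vec_of (I a)) (f k) = smulv (\<alpha> k) (vec_of (I a))"
  shows "mul (vec_of (I a)) (foldr mul (map f ks) one) = smulv (prod_list (map \<alpha> ks)) (vec_of (I a))"
  using h
proof (induction ks)
  case Nil
  then show ?case by (simp add: mul_one_right smulv_def)
next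
  case (Cons k ks)
  have "mul (vec_of (I a)) (foldr mul (map f (k # ks)) one)
      = mul (mul (vec_of (I a)) (f k)) (foldr mul (map f ks) one)" by (simp add: mul_assoc)
  also have "\<dots> = smulv (\<alpha> k) (smulv (prod_list (map \<alpha> ks)) (vec_of (I a)))"
    using Cons by (simp add: mulv_smul_left)
  finally show ?case by (simp add: smulv_smulv)
qed

lemma I_Hinv:
  assumes a: "a \<in> Z" and i: "i < m"
  shows "mul (vec_of (I a)) (Hinv mu m n cA d I hv i)
     = smulv (\<Prod>k<m. qq powi (- cc cA d i k * int (a k))) (vec_of (I a))"
proof -
  have "mul (vec_of (I a)) (Hinv mu m n cA d I hv i)
     = smulv (prod_list (map (\<lambda>k. qq ^ (a k * nat ((- cc cA d i k) mod int n))) [0..<m])) (vec_of (I a))"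
    unfolding Hinv_def by (rule I_foldr[OF a]) (simp add: I_pow a)
  also have "prod_list (map (\<lambda>k. qq ^ (a k * nat ((- cc cA d i k) mod int n))) [0..<m])
      = (\<Prod>k<m. qq ^ (a k * nat ((- cc cA d i k) mod int n)))"
    by (simp add: prod.distinct_set_conv_list[symmetric] atLeast0LessThan)
  also have "\<dots> = (\<Prod>k<m. qq powi (- cc cA d i k * int (a k)))"
  proof (rule prod.cong[OF refl])
    fix k
    have nn: "0 \<le> (- cc cA d i k) mod int n" using npos by simp
    have "qq ^ (a k * nat ((- cc cA d i k) mod int n)) = qq powi (int (nat ((- cc cA d i k) mod int n)) * int (a k))"
      by (simp only: power_int_of_nat[symmetric] of_nat_mult mult.commute)
    also have "\<dots> = (qq powi ((- cc cA d i k) mod int n)) powi (int (a k))"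
      using nn by (simp add: power_int_mult)
    also have "\<dots> = (qq powi (- cc cA d i k)) powi (int (a k))"
      by (simp flip: qq_powi_mod)
    also have "\<dots> = qq powi (- cc cA d i k * int (a k))"
      by (rule power_int_mult[symmetric])
    finally show "qq ^ (a k * nat ((- cc cA d i k) mod int n)) = qq powi (- cc cA d i k * int (a k))" .
  qed
  finally show ?thesis .
qed

lemma I_binv:
  assumes a: "a \<in> Z"
  shows "mul (vec_of (I a)) (binv m n cA d q I i)
     = smulv (\<Prod>k<m. q powi (cc cA d i k * int (a k))) (vec_of (I a))"
proof -
  have b: "binv m n cA d q I i = (\<lambda>x. \<Sum>b\<in>Z. smulv (\<Prod>k<m. q powi (cc cA d i k * int (b k))) (vec_of (I b)) x)"
    by (simp add: binv_def smulv_def)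
  have "mul (vec_of (I a)) (binv m n cA d q I i) = (\<lambda>z. \<Sum>b\<in>Z.
      mul (vec_of (I a)) (smulv (\<Prod>k<m. q powi (cc cA d i k * int (b k))) (vec_of (I b))) z)"
    unfolding b by (rule mulv_sum_right[OF finZ])
  also have "\<dots> = (\<lambda>z. \<Sum>b\<in>Z. if b = a then smulv (\<Prod>k<m. q powi (cc cA d i k * int (a k))) (vec_of (I a)) z else 0)"
    apply (rule ext, rule sum.cong[OF refl])
    using orth a by (auto simp: mulv_smul_right) (simp_all add: smulv_def)
  finally show ?thesis using a finZ by simp
qed

end

context LM begin

lemma vadd_Z: "vadd m n a b \<in> Z"
  using npos by (simp add: vadd_def Zn_def)

lemma vadd_comm: "vadd m n a b = vadd m n b a"
  by (simp add: vadd_def add.commute fun_eq_iff)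

lemma vadd_assoc: "vadd m n (vadd m n a b) c = vadd m n a (vadd m n b c)"
  by (simp add: vadd_def fun_eq_iff mod_add_left_eq mod_add_right_eq add.assoc)

lemma vadd_cancel: "a \<in> Z \<Longrightarrow> b \<in> Z \<Longrightarrow> vadd m n a c = vadd m n b c \<Longrightarrow> a = b"
proof (rule ext)
  fix i assume a: "a \<in> Z" and b: "b \<in> Z" and e: "vadd m n a c = vadd m n b c"
  show "a i = b i"
  proof (cases "i < m")
    case True
    then have "(a i + c i) mod n = (b i + c i) mod n" using fun_cong[OF e, of i] by (simp add: vadd_def)
    then have "qq ^ (a i + c i) = qq ^ (b i + c i)" using qq_pow_eq by blast
    then have "qq ^ a i = qq ^ b i" using q_nz by (simp add: power_add)
    then have "a i mod n = b i mod n" using qq_pow_eq by blast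
    then show ?thesis using a b True by (simp add: Zn_def)
  next
    case False
    then show ?thesis using a b by (simp add: Zn_def)
  qed
qed

lemma eps_Z: "j < m \<Longrightarrow> eps j \<in> Z"
  using n2 by (simp add: eps_def Zn_def)

lemma vadd_from_qq:
  assumes a1: "a1 \<in> Z" and a2: "a2 \<in> Z" and c: "c \<in> Z"
    and h: "\<And>k. k < m \<Longrightarrow> qq ^ (c k) = qq ^ (a1 k + a2 k)"
  shows "vadd m n a1 a2 = c"
proof (rule ext)
  fix i show "vadd m n a1 a2 i = c i"
  proof (cases "i < m")
    case True
    then have "c i mod n = (a1 i + a2 i) mod n" using h qq_pow_eq by blast
    then show ?thesis using c True by (simp add: vadd_def Zn_def)
  next
    case False then show ?thesis using c by (simp add: vadd_def Zn_def)
  qed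
qed

lemma deg_I: "a \<in> Z \<Longrightarrow> deg (I a) = 0" using deg0 by blast
lemma deg_E: "a \<in> Z \<Longrightarrow> i < m \<Longrightarrow> deg (E a i) = 1" using deg1 by blast

lemma deg0_I: "deg x = 0 \<Longrightarrow> \<exists>a\<in>Z. x = I a" using deg0 by blast
lemma deg1_E: "deg x = 1 \<Longrightarrow> \<exists>a\<in>Z. \<exists>i<m. x = E a i"
proof -
  assume "deg x = 1"
  then have "x \<in> (\<lambda>(a, i). E a i) ` (Z \<times> {..<m})" using deg1 by blast
  then show ?thesis by auto
qed

lemma dcI_supp: "c \<in> Z \<Longrightarrow> dc (I c) y z \<noteq> 0 \<Longrightarrow> (\<exists>a\<in>Z. y = I a) \<and> (\<exists>b\<in>Z. z = I b)"
  using dcdeg deg_I deg0_I by (metis add_is_0)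

lemma T_repr:
  assumes c: "c \<in> Z"
  shows "Dlv dc (vec_of (I c)) = (\<lambda>(x,y). \<Sum>s\<in>Z\<times>Z.
     smulv (dc (I c) (I (fst s)) (I (snd s))) (vec_of (I (fst s))) x * vec_of (I (snd s)) y)"
proof (rule ext, clarify)
  fix y z
  show "Dlv dc (vec_of (I c)) (y, z) = (\<Sum>s\<in>Z\<times>Z.
     smulv (dc (I c) (I (fst s)) (I (snd s))) (vec_of (I (fst s))) y * vec_of (I (snd s)) z)"
  proof (cases "\<exists>a1\<in>Z. \<exists>a2\<in>Z. y = I a1 \<and> z = I a2")
    case True
    then obtain a1 a2 where a: "a1 \<in> Z" "a2 \<in> Z" "y = I a1" "z = I a2" by blast
    have "(\<Sum>s\<in>Z\<times>Z. smulv (dc (I c) (I (fst s)) (I (snd s))) (vec_of (I (fst s))) y * vec_of (I (snd s)) z)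
       = (\<Sum>s\<in>Z\<times>Z. if s = (a1, a2) then dc (I c) y z else 0)"
      by (rule sum.cong[OF refl]) (auto simp: a smulv_def vec_of_I_eq split: if_splits)
    then show ?thesis using a finZ by (simp add: Dlv_basis)
  next
    case False
    then have "dc (I c) y z = 0" using dcI_supp[OF c] by blast
    moreover have "(\<Sum>s\<in>Z\<times>Z. smulv (dc (I c) (I (fst s)) (I (snd s))) (vec_of (I (fst s))) y * vec_of (I (snd s)) z) = 0"
      by (rule sum.neutral) (use False in \<open>auto simp: smulv_def vec_of_def\<close>)
    ultimately show ?thesis by (simp add: Dlv_basis)
  qed
qed

lemma lam_zero:
  assumes c: "c \<in> Z" and a1: "a1 \<in> Z" and a2: "a2 \<in> Z" and nz: "dc (I c) (I a1) (I a2) \<noteq> 0"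
  shows "vadd m n a1 a2 = c"
proof (rule vadd_from_qq[OF a1 a2 c])
  fix k assume k: "k < m"
  let ?l = "\<lambda>s. dc (I c) (I (fst s)) (I (snd s))"
  have "Dlv dc (mul (vec_of (I c)) (hv k)) (I a1, I a2) = qq ^ c k * dc (I c) (I a1) (I a2)"
    using Ih c k by (simp add: Dlv_smul Dlv_basis)
  moreover have "Dlv dc (mul (vec_of (I c)) (hv k)) (I a1, I a2)
     = (\<Sum>s\<in>Z\<times>Z. mul (smulv (?l s) (vec_of (I (fst s)))) (hv k) (I a1) * mul (vec_of (I (snd s))) (hv k) (I a2))"
    using Dmul Dh k by (simp add: T_repr[OF c] tmul_tens_sum finZ)
  moreover have "\<dots> = (\<Sum>s\<in>Z\<times>Z. if s = (a1, a2) then ?l (a1,a2) * qq ^ (a1 k) * qq ^ (a2 k) else 0)"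
    apply (rule sum.cong[OF refl]) apply clarify
    apply (simp add: mulv_smul_left I_h k)
    using a1 a2 by (auto simp: smulv_def vec_of_I_eq split: if_splits)
  moreover have "\<dots> = ?l (a1,a2) * qq ^ (a1 k) * qq ^ (a2 k)" using a1 a2 finZ by simp
  ultimately have "qq ^ c k * ?l (a1,a2) = ?l (a1,a2) * qq ^ (a1 k + a2 k)" by (simp add: power_add mult_ac)
  then show "qq ^ c k = qq ^ (a1 k + a2 k)" using nz by simp
qed

lemma sum_lam: "a1 \<in> Z \<Longrightarrow> a2 \<in> Z \<Longrightarrow> (\<Sum>c\<in>Z. dc (I c) (I a1) (I a2)) = 1"
proof -
  assume a: "a1 \<in> Z" "a2 \<in> Z"
  have "Dlv dc one = (\<lambda>p. \<Sum>c\<in>Z. Dlv dc (vec_of (I c)) p)"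
    unfolding onev_def by (rule Dlv_sum[OF finZ])
  then have "(\<Sum>c\<in>Z. Dlv dc (vec_of (I c)) (I a1, I a2)) = tens one one (I a1, I a2)"
    using Done by metis
  then show ?thesis using a by (simp add: Dlv_basis tens_def one_I)
qed

lemma dc_I:
  assumes c: "c \<in> Z"
  shows "dc (I c) y z = (if \<exists>a1\<in>Z. \<exists>a2\<in>Z. y = I a1 \<and> z = I a2 \<and> vadd m n a1 a2 = c then 1 else 0)"
proof (cases "\<exists>a1\<in>Z. \<exists>a2\<in>Z. y = I a1 \<and> z = I a2")
  case True
  then obtain a1 a2 where a: "a1 \<in> Z" "a2 \<in> Z" "y = I a1" "z = I a2" by blast
  have ex: "(\<exists>b1\<in>Z. \<exists>b2\<in>Z. y = I b1 \<and> z = I b2 \<and> vadd m n b1 b2 = c) \<longleftrightarrow> vadd m n a1 a2 = c"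
    using a injI by (auto simp: inj_on_def)
  have "(\<Sum>c\<in>Z. dc (I c) (I a1) (I a2)) = dc (I (vadd m n a1 a2)) (I a1) (I a2)"
    apply (rule sum.mono_neutral_right[of Z "{vadd m n a1 a2}", simplified])
    using finZ vadd_Z lam_zero a by auto
  then have one: "dc (I (vadd m n a1 a2)) (I a1) (I a2) = 1" using sum_lam a by simp
  show ?thesis
  proof (cases "vadd m n a1 a2 = c")
    case True then show ?thesis using one ex a by simp
  next
    case False then show ?thesis using lam_zero[OF c a(1,2)] ex a by auto
  qed
next
  case False
  then have "dc (I c) y z = 0" using dcI_supp[OF c, of y z] by blast
  then show ?thesis using False by auto
qed

definition G :: "(nat \<Rightarrow> nat) \<Rightarrow> ((nat \<Rightarrow> nat) \<times> (nat \<Rightarrow> nat)) set" where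
  "G c = {s\<in>Z\<times>Z. vadd m n (fst s) (snd s) = c}"

lemma finG: "finite (G c)" using finZ by (auto simp: G_def intro: finite_subset[of _ "Z\<times>Z"])

lemma T_G:
  assumes c: "c \<in> Z"
  shows "Dlv dc (vec_of (I c)) = (\<lambda>(x,y). \<Sum>s\<in>G c. vec_of (I (fst s)) x * vec_of (I (snd s)) y)"
proof (rule ext, clarify)
  fix y z
  show "Dlv dc (vec_of (I c)) (y, z) = (\<Sum>s\<in>G c. vec_of (I (fst s)) y * vec_of (I (snd s)) z)"
  proof (cases "\<exists>a1\<in>Z. \<exists>a2\<in>Z. y = I a1 \<and> z = I a2 \<and> vadd m n a1 a2 = c")
    case True
    then obtain a1 a2 where a: "a1 \<in> Z" "a2 \<in> Z" "y = I a1" "z = I a2" "vadd m n a1 a2 = c" by blast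
    have "(\<Sum>s\<in>G c. vec_of (I (fst s)) y * vec_of (I (snd s)) z) = (\<Sum>s\<in>G c. if s = (a1,a2) then 1 else 0)"
      by (rule sum.cong[OF refl]) (auto simp: G_def a vec_of_I_eq split: if_splits)
    also have "\<dots> = 1" using a finG by (simp add: G_def)
    finally show ?thesis using True by (simp add: Dlv_basis dc_I[OF c])
  next
    case False
    have "(\<Sum>s\<in>G c. vec_of (I (fst s)) y * vec_of (I (snd s)) z) = 0"
      by (rule sum.neutral) (use False in \<open>auto simp: G_def vec_of_def\<close>)
    moreover have "dc (I c) y z = 0" using dc_I[OF c, of y z] False by simp
    ultimately show ?thesis by (simp add: Dlv_basis)
  qed
qed

end

context LM begin

definition beta :: "nat \<Rightarrow> (nat \<Rightarrow> nat) \<Rightarrow> 'k" where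
  "beta i b = (\<Prod>k<m. q powi (cc cA d i k * int (b k)))"
definition gamma :: "nat \<Rightarrow> (nat \<Rightarrow> nat) \<Rightarrow> 'k" where
  "gamma i a = (\<Prod>k<m. qq powi (- cc cA d i k * int (a k)))"

lemma I_B2:
  assumes b: "b \<in> Z" and i: "i < m"
  shows "mul (vec_of (I b)) (\<lambda>x. \<Sum>k\<in>{1..<n}. mul (idem1 mu m n I q hv i k) (ev i) x)
     = (if b i \<noteq> 0 then vec_of (E b i) else (\<lambda>_. 0))"
proof -
  have bi: "b i < n" using b i by (simp add: Zn_def)
  have "mul (vec_of (I b)) (\<lambda>x. \<Sum>k\<in>{1..<n}. mul (idem1 mu m n I q hv i k) (ev i) x)
     = (\<lambda>z. \<Sum>k\<in>{1..<n}. mul (mul (vec_of (I b)) (idem1 mu m n I q hv i k)) (ev i) z)"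
    by (simp add: mulv_sum_right mul_assoc)
  also have "\<dots> = (\<lambda>z. \<Sum>k\<in>{1..<n}. if k = b i then vec_of (E b i) z else 0)"
    apply (rule ext, rule sum.cong[OF refl])
    using b i Edef by (auto simp: I_idem mulv_zero_left)
  also have "\<dots> = (if b i \<noteq> 0 then vec_of (E b i) else (\<lambda>_. 0))"
    using bi by (auto simp: fun_eq_iff)
  finally show ?thesis .
qed

lemma I_B3:
  assumes b: "b \<in> Z" and i: "i < m"
  shows "mul (vec_of (I b)) (mul (idem1 mu m n I q hv i 0) (ev i))
     = (if b i = 0 then vec_of (E b i) else (\<lambda>_. 0))"
  using b i Edef npos by (auto simp: mul_assoc[symmetric] I_idem mulv_zero_left)

lemma dcE:
  assumes c: "c \<in> Z" and i: "i < m"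
  shows "dc (E c i) y z =
    (\<Sum>s\<in>G c. vec_of (E (fst s) i) y * (beta i (snd s) * vec_of (I (snd s)) z))
  + (\<Sum>s\<in>G c. vec_of (I (fst s)) y * (if snd s i \<noteq> 0 then vec_of (E (snd s) i) z else 0))
  + (\<Sum>s\<in>G c. (gamma i (fst s) * vec_of (I (fst s)) y) * (if snd s i = 0 then vec_of (E (snd s) i) z else 0))"
proof -
  let ?T = "\<lambda>(x,y). \<Sum>s\<in>G c. vec_of (I (fst s)) x * vec_of (I (snd s)) y"
  have "dc (E c i) y z = Dlv dc (vec_of (E c i)) (y, z)" by (simp add: Dlv_basis)
  also have "\<dots> = tmul mu ?T (Dlv dc (ev i)) (y, z)"
    using Edef c i Dmul T_G[OF c] by simp
  also have "\<dots> = (\<Sum>s\<in>G c. mul (vec_of (I (fst s))) (ev i) y * mul (vec_of (I (snd s))) (binv m n cA d q I i) z)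
     + (\<Sum>s\<in>G c. mul (vec_of (I (fst s))) one y * mul (vec_of (I (snd s))) (\<lambda>x. \<Sum>k\<in>{1..<n}. mul (idem1 mu m n I q hv i k) (ev i) x) z)
     + (\<Sum>s\<in>G c. mul (vec_of (I (fst s))) (Hinv mu m n cA d I hv i) y * mul (vec_of (I (snd s))) (mul (idem1 mu m n I q hv i 0) (ev i)) z)"
    using De i by (simp add: tmul_add3 tmul_tens_sum finG)
  also have "\<dots> =
    (\<Sum>s\<in>G c. vec_of (E (fst s) i) y * (beta i (snd s) * vec_of (I (snd s)) z))
  + (\<Sum>s\<in>G c. vec_of (I (fst s)) y * (if snd s i \<noteq> 0 then vec_of (E (snd s) i) z else 0))
  + (\<Sum>s\<in>G c. (gamma i (fst s) * vec_of (I (fst s)) y) * (if snd s i = 0 then vec_of (E (snd s) i) z else 0))"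
  proof -
    have Z2: "fst s \<in> Z" "snd s \<in> Z" if "s \<in> G c" for s using that by (auto simp: G_def)
    show ?thesis
      apply (intro arg_cong2[where f="(+)"] sum.cong[OF refl])
      subgoal for s using Z2[of s] Edef i by (simp add: I_binv beta_def smulv_def)
      subgoal for s apply (subst I_B2[OF Z2(2)[of s] i], assumption) by (simp add: mul_one_right)
      subgoal for s using Z2[of s] i by (simp add: I_Hinv gamma_def smulv_def I_B3)
      done
  qed
  finally show ?thesis .
qed

end

context LM begin

lemma GZ: "s \<in> G c \<Longrightarrow> fst s \<in> Z \<and> snd s \<in> Z \<and> vadd m n (fst s) (snd s) = c"
  by (auto simp: G_def)

lemma dcE_IE:
  assumes c: "c \<in> Z" and i: "i < m" and a: "a \<in> Z" and b: "b \<in> Z" and i': "i' < m"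
  shows "dc (E c i) (I a) (E b i') = (if i' = i \<and> vadd m n a b = c then (if b i \<noteq> 0 then 1 else gamma i a) else 0)"
proof -
  have 1: "(\<Sum>s\<in>G c. vec_of (E (fst s) i) (I a) * (beta i (snd s) * vec_of (I (snd s)) (E b i'))) = 0"
    by (rule sum.neutral) (use a i in \<open>auto dest: GZ simp: vec_of_IE\<close>)
  have 2: "(\<Sum>s\<in>G c. vec_of (I (fst s)) (I a) * (if snd s i \<noteq> 0 then vec_of (E (snd s) i) (E b i') else 0))
     = (\<Sum>s\<in>G c. if s = (a, b) then (if i' = i \<and> b i \<noteq> 0 then 1 else 0) else 0)"
    apply (rule sum.cong[OF refl])
    subgoal for s using GZ[of s c] a b i i' by (auto simp: vec_of_I_eq vec_of_E_eq)
    done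
  have 3: "(\<Sum>s\<in>G c. (gamma i (fst s) * vec_of (I (fst s)) (I a)) * (if snd s i = 0 then vec_of (E (snd s) i) (E b i') else 0))
     = (\<Sum>s\<in>G c. if s = (a, b) then (if i' = i \<and> b i = 0 then gamma i a else 0) else 0)"
    apply (rule sum.cong[OF refl])
    subgoal for s using GZ[of s c] a b i i' by (auto simp: vec_of_I_eq vec_of_E_eq)
    done
  have mem: "(a, b) \<in> G c \<longleftrightarrow> vadd m n a b = c" using a b by (simp add: G_def)
  show ?thesis unfolding dcE[OF c i] 1 2 3 using finG[of c] mem by auto
qed

lemma dcE_EI:
  assumes c: "c \<in> Z" and i: "i < m" and a: "a \<in> Z" and b: "b \<in> Z" and i': "i' < m"
  shows "dc (E c i) (E b i') (I a) = (if i' = i \<and> vadd m n b a = c then beta i a else 0)"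
proof -
  have 1: "(\<Sum>s\<in>G c. vec_of (E (fst s) i) (E b i') * (beta i (snd s) * vec_of (I (snd s)) (I a)))
     = (\<Sum>s\<in>G c. if s = (b, a) then (if i' = i then beta i a else 0) else 0)"
    apply (rule sum.cong[OF refl])
    subgoal for s using GZ[of s c] a b i i' by (auto simp: vec_of_I_eq vec_of_E_eq)
    done
  have 2: "(\<Sum>s\<in>G c. vec_of (I (fst s)) (E b i') * (if snd s i \<noteq> 0 then vec_of (E (snd s) i) (I a) else 0)) = 0"
    by (rule sum.neutral) (use b i' in \<open>auto dest: GZ simp: vec_of_IE\<close>)
  have 3: "(\<Sum>s\<in>G c. (gamma i (fst s) * vec_of (I (fst s)) (E b i')) * (if snd s i = 0 then vec_of (E (snd s) i) (I a) else 0)) = 0"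
    by (rule sum.neutral) (use b i' in \<open>auto dest: GZ simp: vec_of_IE\<close>)
  have mem: "(b, a) \<in> G c \<longleftrightarrow> vadd m n b a = c" using a b by (simp add: G_def)
  show ?thesis unfolding dcE[OF c i] 1 2 3 using finG[of c] mem by auto
qed

lemma E_I_nz:
  assumes c: "c \<in> Z" and i: "i < m" and b: "b \<in> Z"
    and nz: "mul (vec_of (E c i)) (vec_of (I b)) z \<noteq> 0"
  shows "vadd m n b (eps i) = c"
proof (rule vadd_from_qq[OF b eps_Z[OF i] c])
  let ?X = "mul (vec_of (E c i)) (vec_of (I b))"
  fix k assume k: "k < m"
  have h1: "mul ?X (hv k) = smulv (qq ^ b k) ?X"
    using k b by (simp add: mul_assoc I_h mulv_smul_right)
  have h2: "smulv (qq ^ eps i k) (mul (vec_of (E c i)) (hv k)) = smulv (qq ^ c k) (vec_of (E c i))"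
  proof -
    have "smulv (qq ^ eps i k) (mul (vec_of (E c i)) (hv k))
        = mul (vec_of (I c)) (smulv (qq ^ eps i k) (mul (ev i) (hv k)))"
      using Edef c i by (simp add: mul_assoc mulv_smul_right)
    also have "smulv (qq ^ eps i k) (mul (ev i) (hv k)) = mul (hv k) (ev i)"
      using comm k i by (simp add: eps_def)
    also have "mul (vec_of (I c)) (mul (hv k) (ev i)) = smulv (qq ^ c k) (vec_of (E c i))"
      using Edef c i k by (simp add: mul_assoc[symmetric] I_h mulv_smul_left)
    finally show ?thesis .
  qed
  have h3: "mul ?X (hv k) = mul (mul (vec_of (E c i)) (hv k)) (vec_of (I b))"
    using k b by (simp add: mul_assoc I_h h_I)
  have "smulv (qq ^ eps i k) (mul ?X (hv k)) = mul (smulv (qq ^ eps i k) (mul (vec_of (E c i)) (hv k))) (vec_of (I b))"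
    unfolding h3 by (simp only: mulv_smul_left)
  also have "\<dots> = mul (smulv (qq ^ c k) (vec_of (E c i))) (vec_of (I b))" by (simp only: h2)
  also have "\<dots> = smulv (qq ^ c k) ?X" by (simp only: mulv_smul_left)
  finally have "smulv (qq ^ eps i k) (mul ?X (hv k)) = smulv (qq ^ c k) ?X" .
  then have "smulv (qq ^ eps i k) (smulv (qq ^ b k) ?X) = smulv (qq ^ c k) ?X" by (simp add: h1)
  from fun_cong[OF this, of z]
  have "qq ^ (b k + eps i k) * ?X z = qq ^ c k * ?X z" by (simp add: smulv_def power_add mult_ac)
  then show "qq ^ c k = qq ^ (b k + eps i k)" using nz by simp
qed

lemma E_I:
  assumes c: "c \<in> Z" and i: "i < m" and b: "b \<in> Z"
  shows "mul (vec_of (E c i)) (vec_of (I b)) = (if vadd m n b (eps i) = c then vec_of (E c i) else (\<lambda>_. 0))"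
proof (cases "vadd m n b (eps i) = c")
  case False
  then show ?thesis using E_I_nz[OF c i b] by auto
next
  case True
  let ?X = "mul (vec_of (E c i)) (vec_of (I b))"
  have "vec_of (E c i) = mul (vec_of (E c i)) one" by (simp add: mul_one_right)
  also have "\<dots> = (\<lambda>z. \<Sum>b'\<in>Z. mul (vec_of (E c i)) (vec_of (I b')) z)"
    unfolding onev_def by (rule mulv_sum_right[OF finZ])
  also have "\<dots> = (\<lambda>z. \<Sum>b'\<in>Z. if b' = b then ?X z else 0)"
  proof (rule ext, rule sum.cong[OF refl])
    fix z b' assume b': "b' \<in> Z"
    show "mul (vec_of (E c i)) (vec_of (I b')) z = (if b' = b then ?X z else 0)"
    proof (cases "b' = b")
      case False
      then have ne: "vadd m n b' (eps i) \<noteq> c" using True vadd_cancel[OF b' b] by auto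
      then have "mul (vec_of (E c i)) (vec_of (I b')) z = 0" using E_I_nz[OF c i b'] by blast
      then show ?thesis using False by simp
    qed simp
  qed
  also have "\<dots> = ?X" using b finZ by simp
  finally show ?thesis using True by simp
qed

end

lemma Mprod_basis: "Mprod dc (vec_of u) (vec_of v) x = dc x u v"
  unfolding Mprod_def by (simp add: vec_of_def mult_if01)

lemma MDelta_basis: "MDelta mu (vec_of w) (y, z) = mu y z w"
  unfolding MDelta_def by (simp add: vec_of_def mult_if01)

context LM begin

lemma dc_deg1:
  assumes "dc x y z \<noteq> 0" and "deg y = 0" and "deg z = 1"
  shows "\<exists>c\<in>Z. \<exists>i<m. x = E c i"
  using assms dcdeg deg1_E by force

lemma GamChi_eq:
  assumes a: "a \<in> Z" and j: "j < m"
  shows "GamChi dc I E a j = vec_of (E (vadd m n a (eps j)) j)"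
proof (rule ext)
  fix x
  have ej: "eps j \<in> Z" using eps_Z[OF j] .
  have L: "GamChi dc I E a j x = dc x (I a) (E (eps j) j)"
    by (simp add: GamChi_def chi_def Gam_def Mprod_basis)
  show "GamChi dc I E a j x = vec_of (E (vadd m n a (eps j)) j) x"
  proof (cases "\<exists>c\<in>Z. \<exists>i<m. x = E c i")
    case True
    then obtain c i where ci: "c \<in> Z" "i < m" "x = E c i" by blast
    show ?thesis unfolding L unfolding ci(3) dcE_IE[OF ci(1,2) a ej j] vec_of_E_eq[OF vadd_Z ci(1) j ci(2)]
      by (auto simp: eps_def)
  next
    case False
    then have "dc x (I a) (E (eps j) j) = 0"
      using dc_deg1[of x "I a" "E (eps j) j"] deg_I[OF a] deg_E[OF ej j] by blast
    moreover have "vec_of (E (vadd m n a (eps j)) j) x = 0"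
      using False vadd_Z j by (auto simp: vec_of_def)
    ultimately show ?thesis using L by simp
  qed
qed

lemma part2:
  assumes a: "a \<in> Z" and b: "b \<in> Z" and j: "j < m"
  shows "Mprod dc (chi I a) (GamChi dc I E b j) =
           (\<lambda>x. (\<Prod>i<m. (q ^ n) powi (- cc cA d i j * int (a i) * int ((b j + 1) div n)))
                 * GamChi dc I E (vadd m n a b) j x)"
proof (rule ext)
  fix x
  define b' where "b' = vadd m n b (eps j)"
  have b'Z: "b' \<in> Z" by (simp add: b'_def vadd_Z)
  have ab': "vadd m n a b' = vadd m n (vadd m n a b) (eps j)" by (simp add: b'_def vadd_assoc)
  have bj: "b j < n" using b j by (simp add: Zn_def)
  have b'j: "b' j = (b j + 1) mod n" using j by (simp add: b'_def vadd_def eps_def)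
  let ?P = "\<Prod>i<m. (q ^ n) powi (- cc cA d i j * int (a i) * int ((b j + 1) div n))"
  have P: "?P = (if b' j \<noteq> 0 then 1 else gamma j a)"
  proof (cases "b j + 1 < n")
    case True
    then show ?thesis using b'j by simp
  next
    case False
    then have e: "b j + 1 = n" using bj by simp
    have "?P = (\<Prod>i<m. qq powi (- cc cA d j i * int (a i)))"
      using e csym j npos by (intro prod.cong) auto
    then show ?thesis using b'j e by (simp add: gamma_def)
  qed
  have L: "Mprod dc (chi I a) (GamChi dc I E b j) x = dc x (I a) (E b' j)"
    by (simp add: GamChi_eq[OF b j] chi_def Mprod_basis b'_def)
  show "Mprod dc (chi I a) (GamChi dc I E b j) x = ?P * GamChi dc I E (vadd m n a b) j x"
  proof (cases "\<exists>c\<in>Z. \<exists>i<m. x = E c i")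
    case True
    then obtain c i where ci: "c \<in> Z" "i < m" "x = E c i" by blast
    show ?thesis unfolding L unfolding ci(3) dcE_IE[OF ci(1,2) a b'Z j] GamChi_eq[OF vadd_Z j]
        vec_of_E_eq[OF vadd_Z ci(1) j ci(2)] ab' P
      by auto
  next
    case False
    then have "dc x (I a) (E b' j) = 0"
      using dc_deg1[of x "I a" "E b' j"] deg_I[OF a] deg_E[OF b'Z j] by blast
    moreover have "GamChi dc I E (vadd m n a b) j x = 0"
      using False vadd_Z j by (auto simp: vec_of_def GamChi_eq[OF vadd_Z j])
    ultimately show ?thesis using L by simp
  qed
qed

lemma part3:
  assumes a: "a \<in> Z" and b: "b \<in> Z" and j: "j < m"
  shows "Mprod dc (GamChi dc I E b j) (chi I a) =
           (\<lambda>x. (\<Prod>i<m. q powi (cc cA d j i * int (a i))) * GamChi dc I E (vadd m n a b) j x)"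
proof (rule ext)
  fix x
  define b' where "b' = vadd m n b (eps j)"
  have b'Z: "b' \<in> Z" by (simp add: b'_def vadd_Z)
  have ab': "vadd m n b' a = vadd m n (vadd m n a b) (eps j)"
    by (simp add: b'_def vadd_assoc vadd_comm[of _ a] vadd_comm[of "eps j"])
  have L: "Mprod dc (GamChi dc I E b j) (chi I a) x = dc x (E b' j) (I a)"
    by (simp add: GamChi_eq[OF b j] chi_def Mprod_basis b'_def)
  show "Mprod dc (GamChi dc I E b j) (chi I a) x = (\<Prod>i<m. q powi (cc cA d j i * int (a i))) * GamChi dc I E (vadd m n a b) j x"
  proof (cases "\<exists>c\<in>Z. \<exists>i<m. x = E c i")
    case True
    then obtain c i where ci: "c \<in> Z" "i < m" "x = E c i" by blast
    show ?thesis unfolding L unfolding ci(3) dcE_EI[OF ci(1,2) a b'Z j] GamChi_eq[OF vadd_Z j]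
        vec_of_E_eq[OF vadd_Z ci(1) j ci(2)] ab'
      by (auto simp: beta_def)
  next
    case False
    then have "dc x (E b' j) (I a) = 0"
      using dcdeg deg_I[OF a] deg_E[OF b'Z j] deg1_E by (metis add.right_neutral)
    moreover have "GamChi dc I E (vadd m n a b) j x = 0"
      using False vadd_Z j by (auto simp: vec_of_def GamChi_eq[OF vadd_Z j])
    ultimately show ?thesis using L by simp
  qed
qed

end

context LM begin

lemma part1:
  assumes a: "a \<in> Z" and j: "j < m"
  shows "MDelta mu (GamChi dc I E a j) =
           (\<lambda>(y, z). chi I (vadd m n a (eps j)) y * GamChi dc I E a j z
                     + GamChi dc I E a j y * chi I a z)"
proof (rule ext, clarify)
  fix y z
  define a' where "a' = vadd m n a (eps j)"
  have a'Z: "a' \<in> Z" by (simp add: a'_def vadd_Z)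
  define w where "w = E a' j"
  have G: "GamChi dc I E a j = vec_of w" by (simp add: GamChi_eq[OF a j] w_def a'_def)
  have L: "MDelta mu (GamChi dc I E a j) (y, z) = mul (vec_of y) (vec_of z) w"
    by (simp add: G MDelta_basis mulv_basis)
  have R: "chi I a' y * GamChi dc I E a j z + GamChi dc I E a j y * chi I a z
     = vec_of (I a') y * vec_of w z + vec_of w y * vec_of (I a) z"
    by (simp add: G chi_def)
  show "MDelta mu (GamChi dc I E a j) (y, z) =
        chi I (vadd m n a (eps j)) y * GamChi dc I E a j z + GamChi dc I E a j y * chi I a z"
    unfolding a'_def[symmetric] L R
  proof (cases "(\<exists>b\<in>Z. y = I b) \<and> (\<exists>c\<in>Z. \<exists>i<m. z = E c i)")
    case True
    then obtain b c i where bci: "b \<in> Z" "y = I b" "c \<in> Z" "i < m" "z = E c i" by blast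
    have "mul (vec_of (I b)) (vec_of (E c i)) = mul (mul (vec_of (I b)) (vec_of (I c))) (ev i)"
      using Edef bci by (simp add: mul_assoc)
    also have "\<dots> = (if b = c then vec_of (E c i) else (\<lambda>_. 0))"
      using orth Edef bci by (auto simp: mulv_zero_left)
    finally have M: "mul (vec_of (I b)) (vec_of (E c i)) = (if b = c then vec_of (E c i) else (\<lambda>_. 0))" .
    show "mul (vec_of y) (vec_of z) w = vec_of (I a') y * vec_of w z + vec_of w y * vec_of (I a) z"
      unfolding bci(2,5) M w_def
      using bci a a'Z j by (auto simp: vec_of_E_eq vec_of_I_eq vec_of_IE)
  next
    case nA: False
    show "mul (vec_of y) (vec_of z) w = vec_of (I a') y * vec_of w z + vec_of w y * vec_of (I a) z"
    proof (cases "(\<exists>c\<in>Z. \<exists>i<m. y = E c i) \<and> (\<exists>b\<in>Z. z = I b)")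
      case True
      then obtain b c i where bci: "b \<in> Z" "z = I b" "c \<in> Z" "i < m" "y = E c i" by blast
      have eq: "vadd m n b (eps j) = a' \<longleftrightarrow> b = a"
        using vadd_cancel[OF bci(1) a] by (auto simp: a'_def)
      show ?thesis
        unfolding bci(2,5) E_I[OF bci(3,4,1)] w_def
        using bci a a'Z j eq by (auto simp: vec_of_E_eq vec_of_I_eq vec_of_IE)
    next
      case nB: False
      have l0: "mul (vec_of y) (vec_of z) w = 0"
      proof (rule ccontr)
        assume "mul (vec_of y) (vec_of z) w \<noteq> 0"
        then have "mu y z w \<noteq> 0" by (simp add: mulv_basis)
        then have "deg y + deg z = 1" using mudeg deg_E[OF a'Z j] w_def by metis
        then have "(deg y = 0 \<and> deg z = 1) \<or> (deg y = 1 \<and> deg z = 0)" by auto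
        then show False using nA nB deg0_I deg1_E by blast
      qed
      have r1: "vec_of (I a') y * vec_of w z = 0"
        using nA a'Z j by (auto simp: vec_of_def w_def)
      have r2: "vec_of w y * vec_of (I a) z = 0"
        using nB a'Z a j by (auto simp: vec_of_def w_def)
      show ?thesis unfolding l0 r1 r2 by simp
    qed
  qed
qed

end

theorem lemma3p2:
  fixes q :: "'k::field_char_0"
    and deg :: "'b::finite \<Rightarrow> nat"
    and mu dc :: "'b \<Rightarrow> 'b \<Rightarrow> 'b \<Rightarrow> 'k"
    and I :: "(nat \<Rightarrow> nat) \<Rightarrow> 'b" and E :: "(nat \<Rightarrow> nat) \<Rightarrow> nat \<Rightarrow> 'b"
    and hv ev :: "nat \<Rightarrow> 'b \<Rightarrow> 'k"
    and m n :: nat and cA :: "nat \<Rightarrow> nat \<Rightarrow> int" and d :: "nat \<Rightarrow> nat"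
    and a b :: "nat \<Rightarrow> nat" and j :: nat
  assumes alg_closed: "\<forall>p :: 'k poly. 0 < degree p \<longrightarrow> (\<exists>z. poly p z = 0)"
    and cartan: "cartan_finite_type m cA d"
    and n2: "2 \<le> n"
    and prim: "primitive_root q (n ^ 2)"
    and A: "Aq_model m n cA d q deg mu dc I E hv ev"
    and j: "j < m"
    and a: "a \<in> Zn m n" and b: "b \<in> Zn m n"
  shows "(MDelta mu (GamChi dc I E a j) =
           (\<lambda>(y, z). chi I (vadd m n a (eps j)) y * GamChi dc I E a j z
                     + GamChi dc I E a j y * chi I a z)) \<and>
         (Mprod dc (chi I a) (GamChi dc I E b j) =
           (\<lambda>x. (\<Prod>i<m. (q ^ n) powi (- cc cA d i j * int (a i) * int ((b j + 1) div n)))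
                 * GamChi dc I E (vadd m n a b) j x)) \<and>
         (Mprod dc (GamChi dc I E b j) (chi I a) =
           (\<lambda>x. (\<Prod>i<m. q powi (cc cA d j i * int (a i))) * GamChi dc I E (vadd m n a b) j x))"
proof -
  have csym: "\<forall>i<m. \<forall>j<m. cc cA d i j = cc cA d j i"
    using cartan by (simp add: cartan_finite_type_def cc_def)
  interpret LM m n cA d q deg mu dc I E hv ev
    using n2 prim csym A unfolding Aq_model_def Let_def by (unfold_locales) auto
  show ?thesis using part1[OF a j] part2[OF a b j] part3[OF a b j] by blast
qed

end
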